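(* Let $M_d$ denote the algebra of complex $d\times d$ matrices and $id$ the identity map on $M_d$. Let $P:M_d\to M_d$ be a completely positive linear map and, for $t\ge0$, let $B_t:M_d\to M_d$ be completely positive linear maps. Let $V_t$, $t\ge 0$, be the solution of $$\frac{dV_t}{dt} = P V_t + \int_0^t ds\, B_{t-s} V_s,\qquad \lim_{t\to0}V_t = id.$$ Then $V_t$ is completely positive for all $t\ge0$. Moreover, if $V_t(\mathbf{1}_d)>0$ (positive definite) for all $t\ge0$, then the maps $$A_t(a) = V_t(\mathbf{1}_d)^{-1/2}\,V_t(a)\,V_t(\mathbf{1}_d)^{-1/2},\qquad a\in M_d,$$ are completely positive and satisfy $A_t(\mathbf{1}_d)=\mathbf{1}_d$ for all $t\ge 0$.
   Context: $\mathbf{1}_d$ is the identity matrix. Products of maps such as $P V_t$ denote composition of linear maps on $M_d$. A linear map $\Phi:M_d\to M_d$ is completely positive if $\Phi\otimes id_{M_n}$ is positive for every $n$. *)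

theory Defs
  imports "HOL-Analysis.Analysis"
begin

text \<open>M_d is rendered as complex^'d^'d (d = CARD('d)).\<close>

type_synonym 'd cmat = "complex^'d^'d"

definition cscale :: "complex \<Rightarrow> ('d::finite) cmat \<Rightarrow> ('d::finite) cmat" where
  "cscale c A = (\<chi> i j. c * A $ i $ j)"

definition clinear_map :: "(('d::finite) cmat \<Rightarrow> ('d::finite) cmat) \<Rightarrow> bool" where
  "clinear_map f \<longleftrightarrow>
     (\<forall>A B. f (A + B) = f A + f B) \<and> (\<forall>c A. f (cscale c A) = cscale c (f A))"

definition qform :: "complex^'d \<Rightarrow> ('d::finite) cmat \<Rightarrow> complex^'d \<Rightarrow> complex" where
  "qform x M y = (\<Sum>k\<in>UNIV. cnj (x $ k) * (M *v y) $ k)"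

definition psd :: "('d::finite) cmat \<Rightarrow> bool" where
  "psd M \<longleftrightarrow> (\<forall>x. Im (qform x M x) = 0 \<and> 0 \<le> Re (qform x M x))"

definition pos_def :: "('d::finite) cmat \<Rightarrow> bool" where
  "pos_def M \<longleftrightarrow> (\<forall>x. Im (qform x M x) = 0 \<and> (x \<noteq> 0 \<longrightarrow> 0 < Re (qform x M x)))"

text \<open>Elements of M_n(M_d): block matrices X i j (i, j < n), each block in M_d.
  Positivity = positive semidefiniteness of the (n d) x (n d) matrix.\<close>
definition block_psd :: "nat \<Rightarrow> (nat \<Rightarrow> nat \<Rightarrow> ('d::finite) cmat) \<Rightarrow> bool" where
  "block_psd n X \<longleftrightarrow>
     (\<forall>x :: nat \<Rightarrow> complex^'d.
        Im (\<Sum>i<n. \<Sum>j<n. qform (x i) (X i j) (x j)) = 0 \<and>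
        0 \<le> Re (\<Sum>i<n. \<Sum>j<n. qform (x i) (X i j) (x j)))"

text \<open>Complete positivity: Phi \<otimes> id_{M_n} is positive for every n.
  (Phi \<otimes> id_{M_n}) applied to the block matrix [X_ij] is [Phi(X_ij)].\<close>
definition completely_positive :: "(('d::finite) cmat \<Rightarrow> ('d::finite) cmat) \<Rightarrow> bool" where
  "completely_positive \<Phi> \<longleftrightarrow>
     (\<forall>n X. block_psd n X \<longrightarrow> block_psd n (\<lambda>i j. \<Phi> (X i j)))"

definition psd_sqrt :: "('d::finite) cmat \<Rightarrow> ('d::finite) cmat" where
  "psd_sqrt M = (THE R. psd R \<and> R ** R = M)"

definition inv_sqrt :: "('d::finite) cmat \<Rightarrow> ('d::finite) cmat" where
  "inv_sqrt M = matrix_inv (psd_sqrt M)"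

end

theory Submission
  imports Defs
begin

lemma qform_alt: "qform x M y = (\<Sum>k\<in>UNIV. \<Sum>l\<in>UNIV. cnj (x$k) * M$k$l * y$l)"
  unfolding qform_def matrix_vector_mult_def by (simp add: sum_distrib_left mult.assoc)

lemma qform_add: "qform x (A + B) y = qform x A y + qform x B y"
  unfolding qform_alt by (simp add: algebra_simps sum.distrib)

lemma qform_cscale: "qform x (cscale c A) y = c * qform x A y"
  unfolding qform_alt cscale_def by (simp add: sum_distrib_left algebra_simps)

lemma scaleR_cscale: "c *\<^sub>R A = cscale (of_real c) A"
  unfolding cscale_def vec_eq_iff by (simp del: scaleR_conv_of_real add: scaleR_conv_of_real[of c "A$_$_"])

lemma qform_scaleR: "qform x (c *\<^sub>R A) y = of_real c * qform x A y"
  by (simp add: scaleR_cscale qform_cscale)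

lemma qform_zero[simp]: "qform x 0 y = 0"
  unfolding qform_alt by simp

lemma qform_minus: "qform x (- A) y = - qform x A y"
  unfolding qform_alt by (simp add: sum_negf)

lemma qform_diff: "qform x (A - B) y = qform x A y - qform x B y"
  using qform_add[of x A "-B" y] qform_minus[of x B y] by simp

lemma qform_sum: "qform x (\<Sum>i\<in>I. A i) y = (\<Sum>i\<in>I. qform x (A i) y)"
  by (induction I rule: infinite_finite_induct) (auto simp: qform_add)

lemma qform_id: "qform x (mat 1) x = of_real ((norm x)^2)"
proof -
  have "qform x (mat 1) x = (\<Sum>k\<in>UNIV. cnj (x$k) * x$k)"
    unfolding qform_def by (simp add: matrix_vector_mul_lid)
  also have "\<dots> = (\<Sum>k\<in>UNIV. of_real ((cmod (x$k))^2))"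
    by (intro sum.cong refl) (metis complex_norm_square mult.commute of_real_power)
  also have "\<dots> = of_real (\<Sum>k\<in>UNIV. (cmod (x$k))^2)" by simp
  also have "\<dots> = of_real ((norm x)^2)"
    by (simp add: norm_vec_def L2_set_def sum_nonneg)
  finally show ?thesis .
qed

lemma qform_bound: "cmod (qform x M y) \<le> of_nat (CARD('d)*CARD('d)) * norm x * norm M * norm y"
  for M :: "('d::finite) cmat"
proof -
  have "cmod (qform x M y) \<le> (\<Sum>k\<in>UNIV. \<Sum>l\<in>UNIV. cmod (cnj (x$k) * M$k$l * y$l))"
    unfolding qform_alt by (rule order_trans[OF norm_sum sum_mono]) (rule norm_sum)
  also have "\<dots> \<le> (\<Sum>k\<in>(UNIV::'d set). \<Sum>l\<in>(UNIV::'d set). norm x * norm M * norm y)"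
  proof (intro sum_mono)
    fix k l
    have "cmod (cnj (x$k) * M$k$l * y$l) = norm (x$k) * norm (M$k$l) * norm (y$l)"
      by (simp add: norm_mult)
    also have "\<dots> \<le> norm x * norm M * norm y"
    proof -
      have a: "norm (x$k) \<le> norm x" "norm (y$l) \<le> norm y" by (simp_all add: Finite_Cartesian_Product.norm_nth_le)
      have b: "norm (M$k$l) \<le> norm M" by (rule order_trans[OF Finite_Cartesian_Product.norm_nth_le Finite_Cartesian_Product.norm_nth_le])
      show ?thesis using a b by (intro mult_mono) auto
    qed
    finally show "cmod (cnj (x$k) * M$k$l * y$l) \<le> norm x * norm M * norm y" .
  qed
  also have "\<dots> = of_nat (CARD('d)*CARD('d)) * norm x * norm M * norm y" by simp
  finally show ?thesis .
qed

definition adj :: "('d::finite) cmat \<Rightarrow> 'd cmat" where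
  "adj M = (\<chi> i j. cnj (M$j$i))"

lemma qform_adj: "qform x (adj M) y = cnj (qform y M x)"
  unfolding qform_alt adj_def
  apply (simp add: sum_distrib_left)
  apply (subst sum.swap)
  apply (intro sum.cong refl)
  by (simp add: mult.commute mult.left_commute)

lemma bounded_linear_qform: fixes x :: "complex^('d::finite)" shows "bounded_linear (\<lambda>M::'d cmat. qform x M y)"
proof (rule bounded_linear_intro[where K="of_nat (CARD('d)*CARD('d)) * norm x * norm y"])
  fix A B :: "'d cmat" show "qform x (A + B) y = qform x A y + qform x B y" by (rule qform_add)
next
  fix r and A :: "'d cmat" show "qform x (r *\<^sub>R A) y = r *\<^sub>R qform x A y"
    by (simp add: qform_scaleR del: scaleR_conv_of_real) (simp add: scaleR_conv_of_real)
next
  fix A :: "'d cmat" show "norm (qform x A y) \<le> norm A * (of_nat (CARD('d)*CARD('d)) * norm x * norm y)"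
    using qform_bound[of x A y] by (simp add: algebra_simps)
qed


definition Qb :: "nat \<Rightarrow> (nat \<Rightarrow> complex^'d) \<Rightarrow> (nat \<Rightarrow> nat \<Rightarrow> ('d::finite) cmat) \<Rightarrow> complex" where
  "Qb n y Z = (\<Sum>i<n. \<Sum>j<n. qform (y i) (Z i j) (y j))"

definition Nb :: "nat \<Rightarrow> (nat \<Rightarrow> complex^('d::finite)) \<Rightarrow> real" where
  "Nb n y = (\<Sum>i<n. (norm (y i))^2)"

definition Eb :: "nat \<Rightarrow> nat \<Rightarrow> ('d::finite) cmat" where
  "Eb i j = (if i = j then mat 1 else 0)"

definition Hb :: "(nat \<Rightarrow> nat \<Rightarrow> ('d::finite) cmat) \<Rightarrow> nat \<Rightarrow> nat \<Rightarrow> 'd cmat" where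
  "Hb Z i j = (1/2) *\<^sub>R (Z i j + adj (Z j i))"

lemma block_psd_Qb: "block_psd n X \<longleftrightarrow> (\<forall>y. Im (Qb n y X) = 0 \<and> 0 \<le> Re (Qb n y X))"
  unfolding block_psd_def Qb_def by simp

lemma Nb_nonneg: "0 \<le> Nb n y" unfolding Nb_def by (simp add: sum_nonneg)

lemma Qb_add: "Qb n y (\<lambda>i j. A i j + B i j) = Qb n y A + Qb n y B"
  unfolding Qb_def by (simp add: qform_add sum.distrib)

lemma Qb_diff: "Qb n y (\<lambda>i j. A i j - B i j) = Qb n y A - Qb n y B"
  unfolding Qb_def by (simp add: qform_diff sum_subtractf)

lemma Qb_cscale: "Qb n y (\<lambda>i j. cscale c (A i j)) = c * Qb n y A"
  unfolding Qb_def by (simp add: qform_cscale sum_distrib_left)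

lemma Qb_scaleR: "Qb n y (\<lambda>i j. c *\<^sub>R (A i j)) = of_real c * Qb n y A"
  unfolding Qb_def by (simp add: qform_scaleR sum_distrib_left del: scaleR_conv_of_real)

lemma Qb_Eb: "Qb n y Eb = of_real (Nb n y)"
proof -
  have inner: "(\<Sum>j<n. qform (y i) (Eb i j) (y j)) = qform (y i) (mat 1) (y i)" if "i < n" for i
  proof -
    have "(\<Sum>j<n. qform (y i) (Eb i j) (y j)) = (\<Sum>j<n. if i = j then qform (y i) (mat 1) (y i) else 0)"
      by (intro sum.cong) (auto simp: Eb_def)
    also have "\<dots> = qform (y i) (mat 1) (y i)" using that by (simp add: sum.delta)
    finally show ?thesis .
  qed
  have "Qb n y Eb = (\<Sum>i<n. qform (y i) (mat 1) (y i))"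
    unfolding Qb_def by (intro sum.cong refl) (simp add: inner)
  also have "\<dots> = of_real (Nb n y)" unfolding Nb_def by (simp add: qform_id)
  finally show ?thesis .
qed

lemma Qb_Hb: "Qb n y (Hb Z) = of_real (Re (Qb n y Z))"
proof -
  have "Qb n y (\<lambda>i j. adj (Z j i)) = cnj (Qb n y Z)"
    unfolding Qb_def qform_adj cnj_sum by (rule sum.swap)
  then have "Qb n y (Hb Z) = of_real (1/2) * (Qb n y Z + cnj (Qb n y Z))"
    unfolding Hb_def by (simp add: Qb_scaleR Qb_add del: scaleR_conv_of_real)
  also have "\<dots> = of_real (Re (Qb n y Z))"
    by (simp add: complex_add_cnj)
  finally show ?thesis .
qed

lemma Qb_bound:
  fixes Z :: "nat \<Rightarrow> nat \<Rightarrow> ('d::finite) cmat"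
  assumes "\<And>i j. i < n \<Longrightarrow> j < n \<Longrightarrow> norm (Z i j) \<le> m" and "0 \<le> m"
  shows "cmod (Qb n y Z) \<le> of_nat (CARD('d)*CARD('d)) * of_nat n * m * Nb n y"
proof -
  let ?C = "of_nat (CARD('d)*CARD('d)) :: real"
  have "cmod (Qb n y Z) \<le> (\<Sum>i<n. \<Sum>j<n. cmod (qform (y i) (Z i j) (y j)))"
    unfolding Qb_def by (rule order_trans[OF norm_sum sum_mono]) (rule norm_sum)
  also have "\<dots> \<le> (\<Sum>i<n. \<Sum>j<n. ?C * m * ((norm (y i))^2 + (norm (y j))^2) / 2)"
  proof (intro sum_mono)
    fix i j assume i: "i \<in> {..<n}" and j: "j \<in> {..<n}"
    have "cmod (qform (y i) (Z i j) (y j)) \<le> ?C * norm (y i) * norm (Z i j) * norm (y j)"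
      by (rule qform_bound)
    also have "\<dots> \<le> ?C * norm (y i) * m * norm (y j)"
      using assms(1)[of i j] i j by (intro mult_right_mono mult_left_mono) auto
    also have "\<dots> = ?C * m * (norm (y i) * norm (y j))" by simp
    also have "\<dots> \<le> ?C * m * (((norm (y i))^2 + (norm (y j))^2) / 2)"
    proof -
      have "0 \<le> (norm (y i) - norm (y j))^2" by simp
      then have "norm (y i) * norm (y j) \<le> ((norm (y i))^2 + (norm (y j))^2) / 2"
        by (simp add: power2_diff field_simps)
      then show ?thesis using assms(2) by (intro mult_left_mono) auto
    qed
    finally show "cmod (qform (y i) (Z i j) (y j)) \<le> ?C * m * ((norm (y i))^2 + (norm (y j))^2) / 2"
      by simp
  qed
  also have "\<dots> = ?C * m / 2 * (\<Sum>i<n. \<Sum>j<n. ((norm (y i))^2 + (norm (y j))^2))"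
    by (simp add: sum_distrib_left sum_divide_distrib)
  also have "(\<Sum>i<n. \<Sum>j<n. ((norm (y i))^2 + (norm (y j))^2)) = 2 * of_nat n * Nb n y"
    unfolding Nb_def sum.distrib by (simp add: sum.swap[of "\<lambda>i j. (norm (y j))^2"] sum_distrib_left mult.assoc)
  finally show ?thesis by (simp add: ac_simps)
qed

lemma clinear_add: "clinear_map f \<Longrightarrow> f (A + B) = f A + f B"
  unfolding clinear_map_def by blast
lemma clinear_cscale: "clinear_map f \<Longrightarrow> f (cscale c A) = cscale c (f A)"
  unfolding clinear_map_def by blast
lemma clinear_scaleR: "clinear_map f \<Longrightarrow> f (c *\<^sub>R A) = c *\<^sub>R f A"
  by (simp only: scaleR_cscale clinear_cscale)
lemma clinear_zero: "clinear_map f \<Longrightarrow> f 0 = 0"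
  using clinear_add[of f 0 0] by simp
lemma clinear_minus: "clinear_map f \<Longrightarrow> f (- A) = - f A"
  using clinear_scaleR[of f "-1" A] by simp
lemma clinear_diff: "clinear_map f \<Longrightarrow> f (A - B) = f A - f B"
  using clinear_add[of f A "-B"] clinear_minus[of f B] by simp
lemma clinear_sum: "clinear_map f \<Longrightarrow> f (\<Sum>i\<in>I. A i) = (\<Sum>i\<in>I. f (A i))"
  by (induction I rule: infinite_finite_induct) (auto simp: clinear_zero clinear_add)

lemma cscale_cscale: "cscale a (cscale b A) = cscale (a*b) A"
  unfolding cscale_def by (simp add: vec_eq_iff)
lemma cscale_diff: "cscale a (A - B) = cscale a A - cscale a B"
  unfolding cscale_def by (simp add: vec_eq_iff algebra_simps)

lemma GP:
  fixes \<Phi> :: "('d::finite) cmat \<Rightarrow> 'd cmat"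
  assumes lin: "clinear_map \<Phi>" and cp: "completely_positive \<Phi>"
    and Z: "\<forall>y. 0 \<le> Re (Qb n y Z)"
  shows "0 \<le> Re (Qb n y (\<lambda>i j. \<Phi> (Z i j)))"
proof -
  have cp': "\<And>X. block_psd n X \<Longrightarrow> block_psd n (\<lambda>i j. \<Phi> (X i j))"
    using cp unfolding completely_positive_def by blast
  define H where "H = Hb Z"
  have "block_psd n H" unfolding block_psd_Qb H_def Qb_Hb using Z by simp
  then have PH: "0 \<le> Re (Qb n y (\<lambda>i j. \<Phi> (H i j)))" using cp' block_psd_Qb by blast
  define L where "L i j = cscale (-\<i>) (Z i j - H i j)" for i j
  have QL: "Qb n y' L = of_real (Im (Qb n y' Z))" for y'
  proof -
    have "Qb n y' L = - \<i> * (Qb n y' Z - of_real (Re (Qb n y' Z)))"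
      unfolding L_def Qb_cscale Qb_diff H_def Qb_Hb by simp
    also have "\<dots> = of_real (Im (Qb n y' Z))"
      by (simp add: complex_eq_iff)
    finally show ?thesis .
  qed
  define m where "m = (\<Sum>i<n. \<Sum>j<n. norm (L i j))"
  have m0: "0 \<le> m" unfolding m_def by (simp add: sum_nonneg)
  have mb: "norm (L i j) \<le> m" if "i < n" "j < n" for i j
  proof -
    have "norm (L i j) \<le> (\<Sum>j<n. norm (L i j))"
      using that by (intro member_le_sum) auto
    also have "\<dots> \<le> m" unfolding m_def using that
      by (intro member_le_sum[of i "{..<n}" "\<lambda>i. \<Sum>j<n. norm (L i j)"]) (auto simp: sum_nonneg)
    finally show ?thesis .
  qed
  define c where "c = of_nat (CARD('d)*CARD('d)) * of_nat n * m"
  define L' where "L' i j = L i j + c *\<^sub>R Eb i j" for i j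
  have "block_psd n L'"
    unfolding block_psd_Qb
  proof
    fix y'
    have e: "Qb n y' L' = Qb n y' L + of_real c * of_real (Nb n y')"
      unfolding L'_def Qb_add Qb_scaleR Qb_Eb by simp
    have "cmod (Qb n y' L) \<le> c * Nb n y'"
      unfolding c_def using Qb_bound[of n L m y'] mb m0 by auto
    then have "- (c * Nb n y') \<le> Re (Qb n y' L)"
      using abs_Re_le_cmod[of "Qb n y' L"] by linarith
    then show "Im (Qb n y' L') = 0 \<and> 0 \<le> Re (Qb n y' L')"
      unfolding e QL by simp
  qed
  then have PL': "Im (Qb n y (\<lambda>i j. \<Phi> (L' i j))) = 0" using cp' block_psd_Qb by blast
  have "block_psd n Eb" unfolding block_psd_Qb Qb_Eb by (simp add: Nb_nonneg)
  then have PE: "Im (Qb n y (\<lambda>i j. \<Phi> (Eb i j))) = 0" using cp' block_psd_Qb by blast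
  have "Qb n y (\<lambda>i j. \<Phi> (L' i j)) = Qb n y (\<lambda>i j. \<Phi> (L i j)) + of_real c * Qb n y (\<lambda>i j. \<Phi> (Eb i j))"
    unfolding L'_def clinear_add[OF lin] clinear_scaleR[OF lin] Qb_add Qb_scaleR ..
  then have PL: "Im (Qb n y (\<lambda>i j. \<Phi> (L i j))) = 0" using PL' PE by (simp add: complex_eq_iff)
  have Zd: "Z i j = H i j + cscale \<i> (L i j)" for i j
    unfolding L_def cscale_cscale by (simp add: cscale_def vec_eq_iff)
  have "Qb n y (\<lambda>i j. \<Phi> (Z i j)) = Qb n y (\<lambda>i j. \<Phi> (H i j)) + \<i> * Qb n y (\<lambda>i j. \<Phi> (L i j))"
    unfolding Zd clinear_add[OF lin] clinear_cscale[OF lin] Qb_add Qb_cscale ..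
  then show ?thesis using PH PL by simp
qed


definition Ekl :: "'d \<Rightarrow> 'd \<Rightarrow> ('d::finite) cmat" where
  "Ekl k l = (\<chi> i j. if i = k \<and> j = l then 1 else 0)"

lemma mat_decomp: "(a::('d::finite) cmat) = (\<Sum>k\<in>UNIV. \<Sum>l\<in>UNIV. cscale (a$k$l) (Ekl k l))"
proof -
  have "(\<Sum>k\<in>UNIV. \<Sum>l\<in>UNIV. cscale (a$k$l) (Ekl k l)) $ i $ j = a $ i $ j" for i j
  proof -
    have "(\<Sum>k\<in>UNIV. \<Sum>l\<in>UNIV. cscale (a$k$l) (Ekl k l)) $ i $ j
        = (\<Sum>k\<in>UNIV. \<Sum>l\<in>UNIV. if i = k \<and> j = l then a$k$l else 0)"
      by (simp add: sum_component cscale_def Ekl_def if_distrib cong: if_cong)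
    also have "\<dots> = (\<Sum>k\<in>UNIV. if i = k then a$k$j else 0)"
      by (intro sum.cong refl, case_tac "i = x") simp_all
    also have "\<dots> = a$i$j" by simp
    finally show ?thesis .
  qed
  then show ?thesis by (simp add: vec_eq_iff)
qed

lemma clinear_decomp: "clinear_map f \<Longrightarrow>
   f a = (\<Sum>k\<in>UNIV. \<Sum>l\<in>UNIV. cscale (a$k$l) (f (Ekl k l)))"
  apply (subst mat_decomp[of a])
  by (simp add: clinear_sum clinear_cscale)

lemma continuous_on_cscale:
  assumes "continuous_on S g" "continuous_on S H"
  shows "continuous_on S (\<lambda>s. cscale (g s) (H s :: ('d::finite) cmat))"
  unfolding cscale_def
  by (intro continuous_on_vec_lambda continuous_on_mult assms continuous_on_component)

context
  fixes B :: "real \<Rightarrow> ('d::finite) cmat \<Rightarrow> 'd cmat"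
  assumes B_lin: "\<And>t. t \<ge> 0 \<Longrightarrow> clinear_map (B t)"
    and B_cont: "\<And>a. continuous_on {0..} (\<lambda>t. B t a)"
begin

lemma integrand_cont:
  assumes f: "continuous_on {0..t} f"
  shows "continuous_on {0..t} (\<lambda>s. B (t - s) (f s))"
proof -
  have eq: "B (t - s) (f s) = (\<Sum>k\<in>UNIV. \<Sum>l\<in>UNIV. cscale (f s$k$l) (B (t-s) (Ekl k l)))"
    if "s \<in> {0..t}" for s
    using that by (intro clinear_decomp B_lin) auto
  have c: "continuous_on {0..t} (\<lambda>s. B (t - s) (Ekl k l))" for k l
    by (rule continuous_on_compose2[OF B_cont[of "Ekl k l"]]) (auto intro!: continuous_intros)
  show ?thesis
    apply (rule continuous_on_eq[OF _ eq[symmetric]])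
     apply (intro continuous_on_sum continuous_on_cscale continuous_on_component f c)
    by assumption
qed

end

lemma Qb_integral:
  assumes "\<And>i j. i < n \<Longrightarrow> j < n \<Longrightarrow> F i j integrable_on S"
  shows "Qb n y (\<lambda>i j. integral S (F i j)) = integral S (\<lambda>s. Qb n y (\<lambda>i j. F i j s))"
proof -
  have q: "qform (y i) (integral S (F i j)) (y j) = integral S (\<lambda>s. qform (y i) (F i j s) (y j))"
    if "i < n" "j < n" for i j
    using integral_linear[OF assms[OF that] bounded_linear_qform[of "y i" "y j"]]
    by (simp add: o_def)
  have int: "(\<lambda>s. qform (y i) (F i j s) (y j)) integrable_on S" if "i < n" "j < n" for i j
    using integrable_linear[OF assms[OF that] bounded_linear_qform[of "y i" "y j"]]
    by (simp add: o_def)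
  have "Qb n y (\<lambda>i j. integral S (F i j)) = (\<Sum>i<n. \<Sum>j<n. integral S (\<lambda>s. qform (y i) (F i j s) (y j)))"
    unfolding Qb_def by (intro sum.cong refl) (simp add: q)
  also have "\<dots> = (\<Sum>i<n. integral S (\<lambda>s. \<Sum>j<n. qform (y i) (F i j s) (y j)))"
    by (intro sum.cong refl integral_sum[symmetric]) (auto intro: int)
  also have "\<dots> = integral S (\<lambda>s. \<Sum>i<n. \<Sum>j<n. qform (y i) (F i j s) (y j))"
    by (intro integral_sum[symmetric] integrable_sum) (auto intro: int)
  finally show ?thesis unfolding Qb_def .
qed

lemma Qb_integrable:
  assumes "\<And>i j. i < n \<Longrightarrow> j < n \<Longrightarrow> F i j integrable_on S"
  shows "(\<lambda>s. Qb n y (\<lambda>i j. F i j s)) integrable_on S"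
proof -
  have int: "(\<lambda>s. qform (y i) (F i j s) (y j)) integrable_on S" if "i < n" "j < n" for i j
    using integrable_linear[OF assms[OF that] bounded_linear_qform[of "y i" "y j"]]
    by (simp add: o_def)
  show ?thesis unfolding Qb_def by (intro integrable_sum) (auto intro: int)
qed

lemma Qb_cont:
  assumes "\<And>i j. i < n \<Longrightarrow> j < n \<Longrightarrow> continuous_on S (F i j)"
  shows "continuous_on S (\<lambda>s. Qb n y (\<lambda>i j. F i j s))"
proof -
  have c: "continuous_on S (\<lambda>s. qform (y i) (F i j s) (y j))" if "i < n" "j < n" for i j
    by (rule continuous_on_compose2[OF linear_continuous_on[OF bounded_linear_qform[of "y i" "y j"]] assms[OF that]]) auto
  show ?thesis unfolding Qb_def by (intro continuous_on_sum) (auto intro: c)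
qed


context
  fixes P :: "('d::finite) cmat \<Rightarrow> 'd cmat"
    and B :: "real \<Rightarrow> 'd cmat \<Rightarrow> 'd cmat"
    and V :: "real \<Rightarrow> 'd cmat \<Rightarrow> 'd cmat"
  assumes P_lin: "clinear_map P" and P_cp: "completely_positive P"
    and B_lin: "\<And>t. t \<ge> 0 \<Longrightarrow> clinear_map (B t)"
    and B_cp: "\<And>t. t \<ge> 0 \<Longrightarrow> completely_positive (B t)"
    and B_cont: "\<And>a. continuous_on {0..} (\<lambda>t. B t a)"
    and V_eq: "\<And>t a. t \<ge> 0 \<Longrightarrow>
       ((\<lambda>\<tau>. V \<tau> a) has_vector_derivative
          (P (V t a) + integral {0..t} (\<lambda>s. B (t - s) (V s a)))) (at t within {0..})"
    and V_init: "\<And>a. ((\<lambda>t. V t a) \<longlongrightarrow> a) (at_right 0)"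
begin

lemma V_cont: "continuous_on {0..} (\<lambda>t. V t a)"
  unfolding continuous_on_eq_continuous_within
  using V_eq has_vector_derivative_continuous by fastforce

lemma V_zero: "V 0 a = a"
proof -
  have "((\<lambda>t. V t a) \<longlongrightarrow> V 0 a) (at 0 within {0..})"
    using V_cont[of a] unfolding continuous_on_def by auto
  then have "((\<lambda>t. V t a) \<longlongrightarrow> V 0 a) (at_right 0)"
    by (rule tendsto_within_subset) auto
  then show ?thesis using V_init[of a] tendsto_unique trivial_limit_at_right_real by blast
qed

lemma integrand_cont_V: "t \<ge> 0 \<Longrightarrow> continuous_on {0..t} (\<lambda>s. B (t - s) (V s a))"
  by (rule integrand_cont[OF B_lin B_cont], assumption,
      rule continuous_on_subset[OF V_cont]) auto

lemma Eb_bound: "clinear_map f \<Longrightarrow> norm (f (Eb i j)) \<le> norm (f (mat 1))"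
  unfolding Eb_def by (simp add: clinear_zero)

lemma inv_eps:
  fixes Z :: "nat \<Rightarrow> nat \<Rightarrow> 'd cmat" and T b \<epsilon> :: real
  assumes Z: "\<forall>y. 0 \<le> Re (Qb n y Z)"
    and T: "T \<ge> 0" and b: "\<And>r. r \<in> {0..T} \<Longrightarrow> norm (B r (mat 1)) \<le> b" and b0: "b \<ge> 0"
    and eps: "\<epsilon> > 0"
  defines "K \<equiv> of_nat (CARD('d)*CARD('d)) * of_nat n :: real"
  defines "Lm \<equiv> K * norm (P (mat 1)) + K * b * T + 1"
  shows "\<forall>s\<in>{0..T}. \<forall>y. 0 \<le> Re (Qb n y (\<lambda>i j. V s (Z i j) + (\<epsilon> * exp (Lm * s)) *\<^sub>R Eb i j))"
proof -
  define p where "p = norm (P (mat 1))"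
  define Y where "Y s i j = V s (Z i j) + (\<epsilon> * exp (Lm * s)) *\<^sub>R Eb i j" for s i j
  define g where "g y s = Re (Qb n y (Y s))" for y s
  have K0: "K \<ge> 0" unfolding K_def by simp
  have p0: "p \<ge> 0" unfolding p_def by simp
  have lamd: "Lm = K * p + K * b * T + 1" unfolding Lm_def p_def ..
  have QY: "Qb n y (Y s) = Qb n y (\<lambda>i j. V s (Z i j)) + of_real (\<epsilon> * exp (Lm * s)) * of_real (Nb n y)" for y s
    unfolding Y_def Qb_add Qb_scaleR Qb_Eb ..
  define S where "S = {u \<in> {0..T}. \<forall>s\<in>{0..u}. \<forall>y. 0 \<le> g y s}"
  have g0: "0 \<le> g y 0" for y
    unfolding g_def QY V_zero using Z[rule_format, of y] eps Nb_nonneg[of n y] by simp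
  have S0: "0 \<in> S" unfolding S_def using T g0 by auto
  have Sbdd: "bdd_above S" unfolding S_def by (auto intro: bdd_aboveI[of _ T])
  define \<tau> where "\<tau> = Sup S"
  have tau0: "0 \<le> \<tau>" unfolding \<tau>_def using S0 Sbdd by (rule cSup_upper)
  have tauT: "\<tau> \<le> T" unfolding \<tau>_def using S0 by (intro cSup_least) (auto simp: S_def)
  have gcont: "continuous_on {0..} (g y)" for y
  proof -
    have "continuous_on {0..} (\<lambda>s. Y s i j)" for i j
      unfolding Y_def by (intro continuous_intros V_cont)
    then show ?thesis unfolding g_def by (intro continuous_intros Qb_cont)
  qed
  have C3: "\<forall>s\<in>{0..\<tau>}. \<forall>y. 0 \<le> g y s"
  proof (intro ballI allI)
    fix s y assume s: "s \<in> {0..\<tau>}"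
    show "0 \<le> g y s"
    proof (cases "s < \<tau>")
      case True
      then obtain u where "u \<in> S" "s < u" unfolding \<tau>_def using S0 less_cSupD by blast
      then show ?thesis using s unfolding S_def by auto
    next
      case False
      then have st: "s = \<tau>" using s by auto
      show ?thesis
      proof (cases "\<tau> = 0")
        case True then show ?thesis using st g0 by simp
      next
        case False
        then have tp: "0 < \<tau>" using tau0 by simp
        have lt: "0 \<le> g y x" if "x \<in> {0..<\<tau>}" for x
        proof -
          from that have "x < \<tau>" by simp
          then obtain u where "u \<in> S" "x < u" unfolding \<tau>_def using S0 less_cSupD by blast
          then show ?thesis using that unfolding S_def by auto
        qed
        show ?thesis unfolding st
          apply (rule continuous_ge_on_closure[where S="{0..<\<tau>}" and f="g y" and x=\<tau> and a=0])
          using tp st lt by (auto simp: closure_atLeastLessThan intro: continuous_on_subset[OF gcont])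
      qed
    qed
  qed
  have tauT': "\<tau> = T"
  proof (rule ccontr)
    assume "\<tau> \<noteq> T"
    then have tlt: "\<tau> < T" using tauT by simp
    define D where "D i j = P (V \<tau> (Z i j)) + integral {0..\<tau>} (\<lambda>s. B (\<tau> - s) (V s (Z i j)))
        + (\<epsilon> * (exp (Lm * \<tau>) * Lm)) *\<^sub>R Eb i j" for i j
    have deriv: "((\<lambda>\<sigma>. Y \<sigma> i j) has_vector_derivative D i j) (at \<tau> within {0..})" for i j
    proof -
      have e: "((\<lambda>\<sigma>. \<epsilon> * exp (Lm * \<sigma>)) has_real_derivative \<epsilon> * (exp (Lm * \<tau>) * Lm)) (at \<tau> within {0..})"
        by (auto intro!: derivative_eq_intros)
      have "((\<lambda>\<sigma>. (\<epsilon> * exp (Lm * \<sigma>)) *\<^sub>R Eb i j) has_vector_derivative (\<epsilon> * (exp (Lm * \<tau>) * Lm)) *\<^sub>R Eb i j) (at \<tau> within {0..})"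
        using has_vector_derivative_scaleR[OF e has_vector_derivative_const[of "Eb i j"]] by simp
      then show ?thesis unfolding Y_def D_def
        by (intro has_vector_derivative_add V_eq tau0)
    qed
    have keyD: "\<epsilon> * Nb n y \<le> Re (Qb n y D)" for y
    proof -
      let ?N = "Nb n y"
      have N0: "0 \<le> ?N" by (rule Nb_nonneg)
      have et: "1 \<le> exp (Lm * \<tau>)" using tau0 lamd K0 p0 b0 T by simp
      have PY: "0 \<le> Re (Qb n y (\<lambda>i j. P (Y \<tau> i j)))"
        by (rule GP[OF P_lin P_cp]) (use C3 tau0 in \<open>auto simp: g_def\<close>)
      have PE: "cmod (Qb n y (\<lambda>i j. P (Eb i j))) \<le> K * p * ?N"
        using Qb_bound[of n "\<lambda>i j. P (Eb i j)" p y] Eb_bound[OF P_lin] p0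
        unfolding K_def p_def by auto
      have "Qb n y (\<lambda>i j. P (V \<tau> (Z i j))) = Qb n y (\<lambda>i j. P (Y \<tau> i j)) - of_real (\<epsilon> * exp (Lm * \<tau>)) * Qb n y (\<lambda>i j. P (Eb i j))"
        unfolding Y_def clinear_add[OF P_lin] clinear_scaleR[OF P_lin] Qb_add Qb_scaleR by simp
      then have r: "Re (Qb n y (\<lambda>i j. P (V \<tau> (Z i j)))) = Re (Qb n y (\<lambda>i j. P (Y \<tau> i j))) - \<epsilon> * exp (Lm * \<tau>) * Re (Qb n y (\<lambda>i j. P (Eb i j)))"
        by simp
      have "\<epsilon> * exp (Lm * \<tau>) * Re (Qb n y (\<lambda>i j. P (Eb i j))) \<le> \<epsilon> * exp (Lm * \<tau>) * (K * p * ?N)"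
        using PE abs_Re_le_cmod[of "Qb n y (\<lambda>i j. P (Eb i j))"] eps
        by (intro mult_left_mono) auto
      then have a: "- (\<epsilon> * exp (Lm * \<tau>) * (K * p * ?N)) \<le> Re (Qb n y (\<lambda>i j. P (V \<tau> (Z i j))))"
        using r PY by linarith
      define F where "F i j s = B (\<tau> - s) (V s (Z i j))" for i j s
      have Fint: "F i j integrable_on {0..\<tau>}" for i j
        unfolding F_def by (intro integrable_continuous_interval integrand_cont_V tau0)
      have Fpt: "- (\<epsilon> * exp (Lm * \<tau>) * (K * b * ?N)) \<le> Re (Qb n y (\<lambda>i j. F i j s))" if s: "s \<in> {0..\<tau>}" for s
      proof -
        have ts: "\<tau> - s \<ge> 0" "s \<ge> 0" using s by auto
        have BY: "0 \<le> Re (Qb n y (\<lambda>i j. B (\<tau> - s) (Y s i j)))"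
          by (rule GP[OF B_lin[OF ts(1)] B_cp[OF ts(1)]]) (use C3 s in \<open>auto simp: g_def\<close>)
        have bb: "norm (B (\<tau> - s) (Eb i j)) \<le> b" for i j
          using Eb_bound[OF B_lin[OF ts(1)], of i j] b[of "\<tau> - s"] s tauT by auto
        have BE: "cmod (Qb n y (\<lambda>i j. B (\<tau> - s) (Eb i j))) \<le> K * b * ?N"
          using Qb_bound[of n "\<lambda>i j. B (\<tau> - s) (Eb i j)" b y] bb b0 unfolding K_def by auto
        have "Qb n y (\<lambda>i j. F i j s) = Qb n y (\<lambda>i j. B (\<tau> - s) (Y s i j)) - of_real (\<epsilon> * exp (Lm * s)) * Qb n y (\<lambda>i j. B (\<tau> - s) (Eb i j))"
          unfolding F_def Y_def clinear_add[OF B_lin[OF ts(1)]] clinear_scaleR[OF B_lin[OF ts(1)]] Qb_add Qb_scaleR by simp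
        then have r: "Re (Qb n y (\<lambda>i j. F i j s)) = Re (Qb n y (\<lambda>i j. B (\<tau> - s) (Y s i j))) - \<epsilon> * exp (Lm * s) * Re (Qb n y (\<lambda>i j. B (\<tau> - s) (Eb i j)))"
          by simp
        have "\<epsilon> * exp (Lm * s) * Re (Qb n y (\<lambda>i j. B (\<tau> - s) (Eb i j))) \<le> \<epsilon> * exp (Lm * s) * (K * b * ?N)"
          using BE abs_Re_le_cmod[of "Qb n y (\<lambda>i j. B (\<tau> - s) (Eb i j))"] eps
          by (intro mult_left_mono) auto
        also have "\<dots> \<le> \<epsilon> * exp (Lm * \<tau>) * (K * b * ?N)"
        proof -
          have "Lm \<ge> 0" using lamd K0 p0 b0 T by simp
          then have "Lm * s \<le> Lm * \<tau>" using s by (intro mult_left_mono) auto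
          then show ?thesis using eps K0 b0 N0
            by (intro mult_right_mono mult_left_mono) (auto intro!: mult_nonneg_nonneg)
        qed
        finally show ?thesis using r BY by linarith
      qed
      have "Qb n y (\<lambda>i j. integral {0..\<tau>} (F i j)) = integral {0..\<tau>} (\<lambda>s. Qb n y (\<lambda>i j. F i j s))"
        by (rule Qb_integral) (rule Fint)
      then have "Re (Qb n y (\<lambda>i j. integral {0..\<tau>} (F i j))) = integral {0..\<tau>} (\<lambda>s. Re (Qb n y (\<lambda>i j. F i j s)))"
        using integral_linear[OF Qb_integrable[OF Fint] bounded_linear_Re] by (simp add: o_def)
      also have "\<dots> \<ge> integral {0..\<tau>} (\<lambda>s. - (\<epsilon> * exp (Lm * \<tau>) * (K * b * ?N)))"
        using Fpt integrable_linear[OF Qb_integrable[OF Fint] bounded_linear_Re]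
        by (intro integral_le) (auto simp: o_def)
      finally have "- (\<tau> * (\<epsilon> * exp (Lm * \<tau>) * (K * b * ?N))) \<le> Re (Qb n y (\<lambda>i j. integral {0..\<tau>} (F i j)))"
        using tau0 by (simp add: integral_const_real) (simp add: mult_ac)
      moreover have "\<tau> * (\<epsilon> * exp (Lm * \<tau>) * (K * b * ?N)) \<le> T * (\<epsilon> * exp (Lm * \<tau>) * (K * b * ?N))"
        using tauT eps K0 b0 N0 by (intro mult_right_mono) auto
      ultimately have bI: "- (\<epsilon> * exp (Lm * \<tau>) * (K * b * T * ?N)) \<le> Re (Qb n y (\<lambda>i j. integral {0..\<tau>} (F i j)))"
        by (simp add: algebra_simps)
      have QD: "Qb n y D = Qb n y (\<lambda>i j. P (V \<tau> (Z i j))) + Qb n y (\<lambda>i j. integral {0..\<tau>} (F i j))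
          + of_real (\<epsilon> * (exp (Lm * \<tau>) * Lm)) * of_real ?N"
        unfolding D_def F_def Qb_add Qb_scaleR Qb_Eb ..
      have "Re (Qb n y D) \<ge> \<epsilon> * exp (Lm * \<tau>) * ?N * (Lm - K * p - K * b * T)"
        using a bI unfolding QD by (simp add: algebra_simps)
      also have "\<epsilon> * exp (Lm * \<tau>) * ?N * (Lm - K * p - K * b * T) = \<epsilon> * exp (Lm * \<tau>) * ?N"
        using lamd by simp
      also have "\<dots> \<ge> \<epsilon> * ?N"
      proof -
        have "1 * ?N \<le> exp (Lm * \<tau>) * ?N" using et N0 by (rule mult_right_mono)
        then show ?thesis using eps by (simp add: mult.assoc)
      qed
      finally show ?thesis .
    qed
    define \<delta> where "\<delta> = \<epsilon> / (K + 1)"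
    have dpos: "\<delta> > 0" unfolding \<delta>_def using eps K0 by simp
    have Kd: "K * \<delta> \<le> \<epsilon>" unfolding \<delta>_def using eps K0 by (simp add: field_simps)
    have ev: "\<forall>i\<in>{..<n}. \<forall>j\<in>{..<n}. \<forall>\<^sub>F \<sigma> in at \<tau> within {0..}.
        norm (Y \<sigma> i j - Y \<tau> i j - (\<sigma> - \<tau>) *\<^sub>R D i j) \<le> \<delta> * norm (\<sigma> - \<tau>)"
    proof (intro ballI)
      fix i j
      obtain d where d: "d > 0" "\<forall>\<sigma>\<in>{0..}. norm (\<sigma> - \<tau>) < d \<longrightarrow>
          norm (Y \<sigma> i j - Y \<tau> i j - (\<sigma> - \<tau>) *\<^sub>R D i j) \<le> \<delta> * norm (\<sigma> - \<tau>)"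
        using deriv[of i j] dpos unfolding has_vector_derivative_def has_derivative_within_alt by blast
      show "\<forall>\<^sub>F \<sigma> in at \<tau> within {0..}. norm (Y \<sigma> i j - Y \<tau> i j - (\<sigma> - \<tau>) *\<^sub>R D i j) \<le> \<delta> * norm (\<sigma> - \<tau>)"
        unfolding eventually_at using d by (auto simp: dist_norm)
    qed
    have "\<forall>\<^sub>F \<sigma> in at \<tau> within {0..}. \<forall>i\<in>{..<n}. \<forall>j\<in>{..<n}.
        norm (Y \<sigma> i j - Y \<tau> i j - (\<sigma> - \<tau>) *\<^sub>R D i j) \<le> \<delta> * norm (\<sigma> - \<tau>)"
      by (intro eventually_ball_finite ballI) (use ev in auto)
    then obtain d where d: "d > 0" and dd: "\<And>\<sigma>. \<sigma> \<in> {0..} \<Longrightarrow> \<sigma> \<noteq> \<tau> \<Longrightarrow> dist \<sigma> \<tau> < d \<Longrightarrow>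
        \<forall>i\<in>{..<n}. \<forall>j\<in>{..<n}. norm (Y \<sigma> i j - Y \<tau> i j - (\<sigma> - \<tau>) *\<^sub>R D i j) \<le> \<delta> * norm (\<sigma> - \<tau>)"
      unfolding eventually_at by blast
    have right: "0 \<le> g y \<sigma>" if s: "\<tau> < \<sigma>" "\<sigma> < \<tau> + d" for \<sigma> y
    proof -
      define h where "h = \<sigma> - \<tau>"
      have h: "h > 0" using s h_def by simp
      define R where "R i j = Y \<sigma> i j - Y \<tau> i j - h *\<^sub>R D i j" for i j
      have Rb: "norm (R i j) \<le> \<delta> * h" if "i < n" "j < n" for i j
        using dd[of \<sigma>] s tau0 that h unfolding R_def h_def by (auto simp: dist_norm)
      have RQ: "cmod (Qb n y R) \<le> K * (\<delta> * h) * Nb n y"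
        using Qb_bound[of n R "\<delta> * h" y] Rb dpos h unfolding K_def by auto
      have "Y \<sigma> = (\<lambda>i j. (Y \<tau> i j + h *\<^sub>R D i j) + R i j)" unfolding R_def by auto
      then have "Qb n y (Y \<sigma>) = Qb n y (Y \<tau>) + of_real h * Qb n y D + Qb n y R"
        by (simp only: Qb_add Qb_scaleR)
      then have "g y \<sigma> = g y \<tau> + h * Re (Qb n y D) + Re (Qb n y R)" unfolding g_def by simp
      moreover have "g y \<tau> \<ge> 0" using C3 tau0 by auto
      moreover have "h * Re (Qb n y D) \<ge> h * (\<epsilon> * Nb n y)" using keyD[of y] h by simp
      moreover have "Re (Qb n y R) \<ge> - (K * (\<delta> * h) * Nb n y)"
        using RQ abs_Re_le_cmod[of "Qb n y R"] by linarith
      moreover have "K * (\<delta> * h) * Nb n y \<le> h * (\<epsilon> * Nb n y)"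
      proof -
        have "K * (\<delta> * h) * Nb n y = h * ((K * \<delta>) * Nb n y)" by simp
        also have "\<dots> \<le> h * (\<epsilon> * Nb n y)" using Kd h Nb_nonneg[of n y]
          by (intro mult_left_mono mult_right_mono) auto
        finally show ?thesis .
      qed
      ultimately show ?thesis by linarith
    qed
    define u where "u = min (\<tau> + d/2) T"
    have "u \<in> S" unfolding S_def
    proof (safe)
      show "u \<in> {0..T}" using tau0 d tlt unfolding u_def by auto
    next
      fix s y assume "s \<in> {0..u}"
      then show "0 \<le> g y s" using C3 right[of s y] d unfolding u_def
        by (cases "s \<le> \<tau>") auto
    qed
    then have "u \<le> \<tau>" unfolding \<tau>_def using Sbdd by (rule cSup_upper)
    then show False using d tlt unfolding u_def by auto
  qed
  show ?thesis using C3 tauT' unfolding g_def Y_def by auto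
qed

end

lemma part1:
  fixes P :: "('d::finite) cmat \<Rightarrow> 'd cmat"
    and B :: "real \<Rightarrow> 'd cmat \<Rightarrow> 'd cmat"
    and V :: "real \<Rightarrow> 'd cmat \<Rightarrow> 'd cmat"
  assumes P_lin: "clinear_map P" and P_cp: "completely_positive P"
    and B_lin: "\<And>t. t \<ge> 0 \<Longrightarrow> clinear_map (B t)"
    and B_cp: "\<And>t. t \<ge> 0 \<Longrightarrow> completely_positive (B t)"
    and B_cont: "\<And>a. continuous_on {0..} (\<lambda>t. B t a)"
    and V_lin: "\<And>t. t \<ge> 0 \<Longrightarrow> clinear_map (V t)"
    and V_eq: "\<And>t a. t \<ge> 0 \<Longrightarrow>
       ((\<lambda>\<tau>. V \<tau> a) has_vector_derivative
          (P (V t a) + integral {0..t} (\<lambda>s. B (t - s) (V s a)))) (at t within {0..})"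
    and V_init: "\<And>a. ((\<lambda>t. V t a) \<longlongrightarrow> a) (at_right 0)"
    and t: "t \<ge> 0"
  shows "completely_positive (V t)"
proof -
  obtain b where b0: "b > 0" and b: "\<And>r. r \<in> {0..t} \<Longrightarrow> norm (B r (mat 1)) \<le> b"
  proof -
    have "compact ((\<lambda>r. B r (mat 1)) ` {0..t})"
      by (intro compact_continuous_image compact_Icc continuous_on_subset[OF B_cont]) auto
    then have "bounded ((\<lambda>r. B r (mat 1)) ` {0..t})" by (rule compact_imp_bounded)
    then show ?thesis using that unfolding bounded_pos by auto
  qed
  have Re: "0 \<le> Re (Qb n y (\<lambda>i j. V t (Z i j)))" if Z: "\<forall>y. 0 \<le> Re (Qb n y Z)" for n y Z
  proof (rule ccontr)
    assume neg: "\<not> 0 \<le> Re (Qb n y (\<lambda>i j. V t (Z i j)))"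
    define q where "q = Re (Qb n y (\<lambda>i j. V t (Z i j)))"
    have q: "q < 0" using neg q_def by simp
    define K where "K = (of_nat (CARD('d)*CARD('d)) * of_nat n :: real)"
    define Lm where "Lm = K * norm (P (mat 1)) + K * b * t + 1"
    define c where "c = exp (Lm * t) * (Nb n y + 1)"
    have c0: "c > 0" unfolding c_def using Nb_nonneg[of n y] by (simp add: add_nonneg_pos)
    define \<epsilon> where "\<epsilon> = - q / (2 * c)"
    have eps: "\<epsilon> > 0" unfolding \<epsilon>_def using q c0 by (simp add: divide_neg_pos)
    have "0 \<le> Re (Qb n y (\<lambda>i j. V t (Z i j) + (\<epsilon> * exp (Lm * t)) *\<^sub>R Eb i j))"
      using inv_eps[OF P_lin P_cp B_lin B_cp B_cont V_eq V_init Z t b _ eps] b0 t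
      unfolding Lm_def K_def by auto
    also have "Re (Qb n y (\<lambda>i j. V t (Z i j) + (\<epsilon> * exp (Lm * t)) *\<^sub>R Eb i j)) = q + \<epsilon> * exp (Lm * t) * Nb n y"
      unfolding Qb_add Qb_scaleR Qb_Eb q_def by simp
    finally have "0 \<le> q + \<epsilon> * exp (Lm * t) * Nb n y" .
    moreover have "\<epsilon> * exp (Lm * t) * Nb n y \<le> \<epsilon> * c"
    proof -
      have "exp (Lm * t) * Nb n y \<le> exp (Lm * t) * (Nb n y + 1)" by simp
      then show ?thesis unfolding c_def using eps by (simp add: mult.assoc)
    qed
    moreover have "\<epsilon> * c = - q / 2" unfolding \<epsilon>_def using c0 by simp
    ultimately show False using q by linarith
  qed
  show ?thesis unfolding completely_positive_def block_psd_Qb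
  proof (intro allI impI conjI)
    fix n and X :: "nat \<Rightarrow> nat \<Rightarrow> 'd cmat" and y assume X: "\<forall>y. Im (Qb n y X) = 0 \<and> 0 \<le> Re (Qb n y X)"
    show "0 \<le> Re (Qb n y (\<lambda>i j. V t (X i j)))" using Re X by blast
    have cs: "0 \<le> Re (c * Qb n y (\<lambda>i j. V t (X i j)))" if "c = \<i> \<or> c = - \<i>" for c
    proof -
      have "\<forall>y. 0 \<le> Re (Qb n y (\<lambda>i j. cscale c (X i j)))"
        unfolding Qb_cscale using X that by auto
      then have "0 \<le> Re (Qb n y (\<lambda>i j. V t (cscale c (X i j))))" by (rule Re)
      then show ?thesis unfolding clinear_cscale[OF V_lin[OF t]] Qb_cscale .
    qed
    show "Im (Qb n y (\<lambda>i j. V t (X i j))) = 0"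
      using cs[of \<i>] cs[of "-\<i>"] by simp
  qed
qed


definition cip :: "complex^('d::finite) \<Rightarrow> complex^'d \<Rightarrow> complex" where
  "cip u v = (\<Sum>k\<in>UNIV. cnj (u$k) * v$k)"

lemma qform_cip: "qform x M y = cip x (M *v y)"
  unfolding qform_def cip_def ..

lemma cip_adj: "cip x (A *v y) = cip (adj A *v x) y"
proof -
  have "cip x (A *v y) = (\<Sum>k\<in>UNIV. \<Sum>l\<in>UNIV. cnj (x$k) * A$k$l * y$l)"
    unfolding cip_def matrix_vector_mult_def by (simp add: sum_distrib_left mult.assoc)
  also have "\<dots> = (\<Sum>l\<in>UNIV. \<Sum>k\<in>UNIV. cnj (x$k) * A$k$l * y$l)" by (rule sum.swap)
  also have "\<dots> = cip (adj A *v x) y"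
    unfolding cip_def matrix_vector_mult_def adj_def by (simp add: sum_distrib_right sum_distrib_left mult_ac)
  finally show ?thesis .
qed

lemma adj_adj[simp]: "adj (adj A) = A"
  unfolding adj_def by (simp add: vec_eq_iff)

lemma adj_mult: "adj (A ** B) = adj B ** adj A"
  unfolding adj_def matrix_matrix_mult_def by (simp add: vec_eq_iff mult.commute)

lemma adj_add: "adj (A + B) = adj A + adj B"
  unfolding adj_def by (simp add: vec_eq_iff)

lemma adj_diff: "adj (A - B) = adj A - adj B"
  unfolding adj_def by (simp add: vec_eq_iff)

lemma adj_scaleR: "adj (c *\<^sub>R A) = c *\<^sub>R adj A"
  unfolding adj_def by (simp add: vec_eq_iff)

lemma adj_id[simp]: "adj (mat 1) = mat 1"
  unfolding adj_def mat_def by (simp add: vec_eq_iff)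

lemma adj_zero[simp]: "adj 0 = 0"
  unfolding adj_def by (simp add: vec_eq_iff)

lemma qform_mult: "qform x (A ** B) y = qform (adj A *v x) B y"
  unfolding qform_cip matrix_vector_mul_assoc[symmetric] cip_adj ..

lemma qform_mult2: "qform x (A ** B) y = qform x A (B *v y)"
  unfolding qform_def matrix_vector_mul_assoc ..

lemma qform_addL: "qform (x + x') M y = qform x M y + qform x' M y"
  unfolding qform_def by (simp add: algebra_simps sum.distrib)

lemma qform_addR: "qform x M (y + y') = qform x M y + qform x M y'"
  unfolding qform_def by (simp add: algebra_simps sum.distrib matrix_vector_right_distrib)

lemma qform_axis: "qform (axis a \<alpha>) M (axis b \<beta>) = cnj \<alpha> * M$a$b * \<beta>"
proof -
  have "qform (axis a \<alpha>) M (axis b \<beta>) = (\<Sum>k\<in>UNIV. \<Sum>l\<in>UNIV. cnj ((axis a \<alpha>)$k) * M$k$l * (axis b \<beta>)$l)"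
    by (rule qform_alt)
  also have "\<dots> = (\<Sum>k\<in>UNIV. \<Sum>l\<in>UNIV. (if k = a then (if l = b then cnj \<alpha> * M$k$l * \<beta> else 0) else 0))"
    by (intro sum.cong refl) (auto simp: axis_def)
  also have "\<dots> = (\<Sum>k\<in>UNIV. if k = a then cnj \<alpha> * M$k$b * \<beta> else 0)"
    by (intro sum.cong refl, case_tac "x = a") auto
  also have "\<dots> = cnj \<alpha> * M$a$b * \<beta>" by simp
  finally show ?thesis .
qed

lemma polarization:
  fixes A :: "('d::finite) cmat"
  defines "q \<equiv> \<lambda>x. qform x A x"
  shows "2 * A$a$b = q (axis a 1 + axis b 1) - q (axis a 1) - q (axis b 1)
      - \<i> * (q (axis a 1 + axis b \<i>) - q (axis a 1) - q (axis b 1))"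
proof -
  have "cnj \<i> * A$b$b * \<i> = (cnj \<i> * \<i>) * A$b$b" by (simp only: mult_ac)
  then have "q (axis b \<i>) = q (axis b 1)" unfolding q_def qform_axis by simp
  then show ?thesis
    unfolding q_def qform_addL qform_addR qform_axis
    by (simp add: algebra_simps)
qed

lemma qform_zero_imp: "(\<And>x. qform x A x = 0) \<Longrightarrow> A = 0"
  using polarization[of A] by (simp add: vec_eq_iff)

definition herm :: "('d::finite) cmat \<Rightarrow> bool" where "herm A \<longleftrightarrow> adj A = A"

lemma herm_real: "herm A \<Longrightarrow> Im (qform x A x) = 0"
  using qform_adj[of x A x] unfolding herm_def by (metis Reals_cnj_iff complex_is_Real_iff)

lemma Im_zero_herm:
  assumes "\<And>x. Im (qform x A x) = 0" shows "herm A"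
proof -
  have "qform x (A - adj A) x = 0" for x
  proof -
    have "qform x (A - adj A) x = qform x A x - cnj (qform x A x)"
      by (simp add: qform_diff qform_adj)
    then show ?thesis using assms[of x] by (simp add: complex_eq_iff)
  qed
  then have "A - adj A = 0" by (rule qform_zero_imp)
  then show ?thesis unfolding herm_def by simp
qed

lemma psd_herm: "psd A \<Longrightarrow> herm A" unfolding psd_def using Im_zero_herm by blast

lemma qform_0L[simp]: "qform 0 M y = 0" unfolding qform_alt by simp

lemma pos_def_psd: "pos_def A \<Longrightarrow> psd A"
  unfolding pos_def_def psd_def
  by (metis less_imp_le order.refl qform_0L zero_complex.sel(1))


lemma matrix_sub_ldistrib: "(A::('d::finite) cmat) ** (B - C) = A ** B - A ** C"
  using matrix_add_ldistrib[of A B "- C"] by (simp add: vec_eq_iff matrix_matrix_mult_def sum_subtractf algebra_simps)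

lemma matrix_add_rdistrib: "((B::('d::finite) cmat) + C) ** A = B ** A + C ** A"
  by (simp add: vec_eq_iff matrix_matrix_mult_def sum.distrib algebra_simps)

lemma matrix_sub_rdistrib: "((B::('d::finite) cmat) - C) ** A = B ** A - C ** A"
  by (simp add: vec_eq_iff matrix_matrix_mult_def sum_subtractf algebra_simps)

lemma matrix_scaleR_right: "(A::('d::finite) cmat) ** (c *\<^sub>R B) = c *\<^sub>R (A ** B)"
  by (simp add: matrix_matrix_mult_def vec_eq_iff scaleR_sum_right del: scaleR_conv_of_real)

lemma matrix_scaleR_left: "(c *\<^sub>R A) ** (B::('d::finite) cmat) = c *\<^sub>R (A ** B)"
  by (simp add: matrix_matrix_mult_def vec_eq_iff scaleR_sum_right del: scaleR_conv_of_real)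

fun mpow :: "('d::finite) cmat \<Rightarrow> nat \<Rightarrow> 'd cmat" where
  "mpow N 0 = mat 1"
| "mpow N (Suc j) = N ** mpow N j"

lemma mpow_add: "mpow N (i + j) = mpow N i ** mpow N j"
  by (induction i) (auto simp: matrix_mul_assoc)

lemma mpow_one: "mpow N 1 = N" by simp

lemma mpow_comm: "N ** mpow N j = mpow N j ** N"
  using mpow_add[of N 1 j] mpow_add[of N j 1] by (simp add: add.commute)

lemma herm_mpow: "herm N \<Longrightarrow> herm (mpow N j)"
  unfolding herm_def by (induction j) (auto simp: adj_mult mpow_comm)

lemma psd_cong: "psd A \<Longrightarrow> herm H \<Longrightarrow> psd (H ** A ** H)"
  unfolding psd_def herm_def
  by (metis qform_mult qform_mult2)

lemma psd_id: "psd (mat 1)" unfolding psd_def qform_id by simp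

lemma psd_add: "psd A \<Longrightarrow> psd B \<Longrightarrow> psd (A + B)"
  unfolding psd_def qform_add by simp

lemma psd_scaleR: "psd A \<Longrightarrow> c \<ge> 0 \<Longrightarrow> psd (c *\<^sub>R A)"
  unfolding psd_def qform_scaleR by simp

lemma psd_zero: "psd 0" unfolding psd_def by simp

lemma qform_herm_real: "herm A \<Longrightarrow> qform x A x = of_real (Re (qform x A x))"
  using herm_real[of A x] by (simp add: complex_eq_iff)

inductive NCw :: "('d::finite) cmat \<Rightarrow> 'd cmat \<Rightarrow> real \<Rightarrow> bool" for N where
  pw: "NCw N (mpow N j) 1"
| zw: "NCw N 0 0"
| aw: "NCw N A a \<Longrightarrow> NCw N B b \<Longrightarrow> NCw N (A + B) (a + b)"
| sw: "NCw N A a \<Longrightarrow> c \<ge> 0 \<Longrightarrow> NCw N (c *\<^sub>R A) (c * a)"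

lemma NCw_nonneg: "NCw N A a \<Longrightarrow> 0 \<le> a"
  by (induction rule: NCw.induct) auto

lemma NCw_mult_pow: "NCw N B b \<Longrightarrow> NCw N (mpow N i ** B) b"
proof (induction rule: NCw.induct)
  case (pw j) then show ?case using NCw.pw[of N "i + j"] by (simp add: mpow_add)
next
  case zw then show ?case by (simp add: NCw.zw)
next
  case (aw A a B b) then show ?case by (simp add: matrix_add_ldistrib NCw.aw)
next
  case (sw A a c) then show ?case by (simp add: matrix_scaleR_right NCw.sw del: scaleR_conv_of_real)
qed

lemma NCw_mult: "NCw N A a \<Longrightarrow> NCw N B b \<Longrightarrow> NCw N (A ** B) (a * b)"
proof (induction rule: NCw.induct)
  case (pw j) then show ?case using NCw_mult_pow by simp
next
  case zw then show ?case by (simp add: NCw.zw)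
next
  case (aw A a B' b') then show ?case by (simp add: matrix_add_rdistrib NCw.aw distrib_right)
next
  case (sw A a c) then show ?case
    using NCw.sw[of N "A ** B" "a * b" c] by (simp add: matrix_scaleR_left mult.assoc del: scaleR_conv_of_real)
qed

lemma pow_comm: "R ** N = N ** R \<Longrightarrow> R ** mpow N j = mpow N j ** R"
  by (induction j) (auto, metis matrix_mul_assoc)

lemma NCw_comm: "NCw N A a \<Longrightarrow> R ** N = N ** R \<Longrightarrow> R ** A = A ** R"
proof (induction rule: NCw.induct)
  case (pw j) then show ?case by (rule pow_comm)
next
  case zw then show ?case by simp
next
  case (aw A a B b) then show ?case by (simp add: matrix_add_ldistrib matrix_add_rdistrib)
next
  case (sw A a c) then show ?case by (simp add: matrix_scaleR_left matrix_scaleR_right del: scaleR_conv_of_real)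
qed

context
  fixes N :: "('d::finite) cmat"
  assumes hN: "herm N" and pN: "psd N" and pIN: "psd (mat 1 - N)"
begin

lemma psd_N_N2: "psd (N - N ** N)"
proof -
  have hI: "herm (mat 1 - N)" using hN unfolding herm_def by (simp add: adj_diff)
  have "N - N ** N = (mat 1 - N) ** N ** (mat 1 - N) + N ** (mat 1 - N) ** N"
    by (simp add: matrix_sub_ldistrib matrix_sub_rdistrib matrix_mul_assoc algebra_simps)
  then show ?thesis using psd_add psd_cong pN pIN hI hN by metis
qed

lemma mpow_psd: "psd (mpow N j) \<and> psd (mpow N j - mpow N (Suc j))"
proof -
  obtain m where "j = 2*m \<or> j = 2*m + 1" by (metis odd_two_times_div_two_succ dvd_mult_div_cancel)
  moreover have "psd (mpow N (2*m)) \<and> psd (mpow N (2*m) - mpow N (Suc (2*m)))"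
  proof -
    have e1: "mpow N (2*m) = mpow N m ** mat 1 ** mpow N m"
      using mpow_add[of N m m] by (simp add: mult_2)
    have e2: "mpow N (2*m) - mpow N (Suc (2*m)) = mpow N m ** (mat 1 - N) ** mpow N m"
    proof -
      have "mpow N (Suc (2*m)) = N ** (mpow N m ** mpow N m)"
        using mpow_add[of N m m] by (simp add: mult_2)
      also have "\<dots> = (N ** mpow N m) ** mpow N m" by (simp only: matrix_mul_assoc)
      also have "\<dots> = mpow N m ** N ** mpow N m" by (subst mpow_comm) (rule refl)
      finally have f: "mpow N (Suc (2*m)) = mpow N m ** N ** mpow N m" .
      show ?thesis by (simp only: matrix_sub_ldistrib matrix_sub_rdistrib e1 f)
    qed
    have "psd (mpow N (2*m))" by (subst e1) (rule psd_cong[OF psd_id herm_mpow[OF hN]])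
    moreover have "psd (mpow N (2*m) - mpow N (Suc (2*m)))" by (subst e2) (rule psd_cong[OF pIN herm_mpow[OF hN]])
    ultimately show ?thesis ..
  qed
  moreover have "psd (mpow N (2*m+1)) \<and> psd (mpow N (2*m+1) - mpow N (Suc (2*m+1)))"
  proof -
    have e1: "mpow N (2*m+1) = mpow N m ** N ** mpow N m"
    proof -
      have "mpow N (2*m+1) = mpow N m ** mpow N (Suc m)"
        using mpow_add[of N m "Suc m"] by (simp add: mult_2)
      also have "\<dots> = mpow N m ** N ** mpow N m" by (simp add: matrix_mul_assoc)
      finally show ?thesis .
    qed
    have e2: "mpow N (2*m+1) - mpow N (Suc (2*m+1)) = mpow N m ** (N - N ** N) ** mpow N m"
    proof -
      have "mpow N (Suc (2*m+1)) = mpow N (Suc m) ** mpow N (Suc m)"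
        using mpow_add[of N "Suc m" "Suc m"] by (simp add: mult_2)
      also have "\<dots> = (N ** mpow N m) ** (N ** mpow N m)" by simp
      also have "\<dots> = (mpow N m ** N) ** (N ** mpow N m)" by (subst (1) mpow_comm) (rule refl)
      also have "\<dots> = mpow N m ** (N ** N) ** mpow N m" by (simp only: matrix_mul_assoc)
      finally have f: "mpow N (Suc (2*m+1)) = mpow N m ** (N ** N) ** mpow N m" .
      show ?thesis by (simp only: matrix_sub_ldistrib matrix_sub_rdistrib e1 f)
    qed
    have "psd (mpow N (2*m+1))" by (subst e1) (rule psd_cong[OF pN herm_mpow[OF hN]])
    moreover have "psd (mpow N (2*m+1) - mpow N (Suc (2*m+1)))" by (subst e2) (rule psd_cong[OF psd_N_N2 herm_mpow[OF hN]])
    ultimately show ?thesis ..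
  qed
  ultimately show ?thesis by auto
qed

lemma mpow_le: "Re (qform x (mpow N j) x) \<le> (norm x)^2"
proof (induction j)
  case 0 then show ?case by (simp add: qform_id)
next
  case (Suc j)
  have "0 \<le> Re (qform x (mpow N j - mpow N (Suc j)) x)"
    using mpow_psd[of j] unfolding psd_def by blast
  then show ?case using Suc unfolding qform_diff by simp
qed


lemma NCw_herm: "NCw N A a \<Longrightarrow> herm A"
proof (induction rule: NCw.induct)
  case (pw j) then show ?case by (rule herm_mpow[OF hN])
next
  case zw then show ?case by (simp add: herm_def)
next
  case (aw A a B b) then show ?case by (simp add: herm_def adj_add)
next
  case (sw A a c) then show ?case by (simp add: herm_def adj_scaleR del: scaleR_conv_of_real)
qed

lemma NCw_bounds: "NCw N A a \<Longrightarrow> psd A \<and> Re (qform x A x) \<le> a * (norm x)^2"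
proof (induction rule: NCw.induct)
  case (pw j) then show ?case using mpow_psd mpow_le by auto
next
  case zw then show ?case by (simp add: psd_zero)
next
  case (aw A a B b) then show ?case by (simp add: psd_add qform_add distrib_right)
next
  case (sw A a c)
  have "Re (qform x (c *\<^sub>R A) x) = c * Re (qform x A x)" by (simp add: qform_scaleR)
  also have "\<dots> \<le> c * (a * (norm x)^2)" using sw by (intro mult_left_mono) auto
  finally show ?case using sw psd_scaleR[of A c] by (simp add: mult.assoc)
qed

end


fun Zs :: "('d::finite) cmat \<Rightarrow> nat \<Rightarrow> 'd cmat" where
  "Zs N 0 = 0"
| "Zs N (Suc k) = (1/2) *\<^sub>R (N + Zs N k ** Zs N k)"

fun zs :: "nat \<Rightarrow> real" where
  "zs 0 = 0"
| "zs (Suc k) = (1 + zs k * zs k) / 2"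

lemma zs_bounds: "0 \<le> zs k \<and> zs k \<le> 1"
proof (induction k)
  case 0 then show ?case by simp
next
  case (Suc k)
  then have "zs k * zs k \<le> 1" using mult_le_one by blast
  then show ?case using Suc by simp
qed

lemma tendsto_mmult:
  fixes f g :: "'a \<Rightarrow> ('d::finite) cmat"
  assumes "(f \<longlongrightarrow> A) F" "(g \<longlongrightarrow> B) F"
  shows "((\<lambda>x. f x ** g x) \<longlongrightarrow> A ** B) F"
  unfolding matrix_matrix_mult_def
  by (auto intro!: vec_tendstoI tendsto_intros assms)

lemma tendsto_adj:
  fixes f :: "'a \<Rightarrow> ('d::finite) cmat"
  assumes "(f \<longlongrightarrow> A) F"
  shows "((\<lambda>x. adj (f x)) \<longlongrightarrow> adj A) F"
  unfolding adj_def
  by (auto intro!: vec_tendstoI tendsto_intros assms)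

lemma herm_sq_zero:
  assumes h: "herm A" and z: "A ** A = 0"
  shows "A = 0"
proof -
  have "qform x A x = 0" for x
  proof -
    have "cip (A *v x) (A *v x) = qform x (A ** A) x"
      unfolding qform_cip matrix_vector_mul_assoc[symmetric] cip_adj using h by (simp add: herm_def)
    then have "qform (A *v x) (mat 1) (A *v x) = 0" using z by (simp add: qform_cip cip_def)
    then have "norm (A *v x) = 0" unfolding qform_id by simp
    then have "A *v x = 0" by simp
    then show ?thesis by (simp add: qform_def cip_def)
  qed
  then show ?thesis by (rule qform_zero_imp)
qed

context
  fixes N :: "('d::finite) cmat"
  assumes hN: "herm N" and pN: "psd N" and pIN: "psd (mat 1 - N)"
begin

lemma Zs_NCw: "NCw N (Zs N k) (zs k)"
proof (induction k)
  case 0 then show ?case by (simp add: NCw.zw)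
next
  case (Suc k)
  have n: "NCw N N 1" using NCw.pw[of N 1] by simp
  have "NCw N (N + Zs N k ** Zs N k) (1 + zs k * zs k)"
    by (intro NCw.aw n NCw_mult Suc)
  then show ?case using NCw.sw[of N _ _ "1/2"] by simp
qed

lemma NCw_commute: "NCw N A a \<Longrightarrow> NCw N B b \<Longrightarrow> A ** B = B ** A"
proof -
  assume A: "NCw N A a" and B: "NCw N B b"
  have "N ** A = A ** N" by (rule NCw_comm[OF A]) simp
  then show ?thesis using NCw_comm[OF B, of A] by simp
qed

lemma Zs_diff: "\<exists>w. NCw N (Zs N (Suc k) - Zs N k) w"
proof (induction k)
  case 0
  have "NCw N ((1/2) *\<^sub>R mpow N 1) ((1/2) * 1)" by (intro NCw.sw NCw.pw) auto
  then show ?case by auto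
next
  case (Suc k)
  then obtain w where w: "NCw N (Zs N (Suc k) - Zs N k) w" by blast
  define A where "A = Zs N (Suc k)"
  define B where "B = Zs N k"
  have AB: "A ** B = B ** A" unfolding A_def B_def by (rule NCw_commute[OF Zs_NCw Zs_NCw])
  have e: "Zs N (Suc (Suc k)) - Zs N (Suc k) = (1/2) *\<^sub>R ((A - B) ** (A + B))"
  proof -
    have m: "(A - B) ** (A + B) = A ** A - B ** B"
      by (simp add: matrix_add_ldistrib matrix_sub_rdistrib AB)
    have "Zs N (Suc (Suc k)) - Zs N (Suc k) = (1/2) *\<^sub>R (N + A ** A) - (1/2) *\<^sub>R (N + B ** B)"
      by (simp only: A_def B_def Zs.simps)
    also have "\<dots> = (1/2) *\<^sub>R (A ** A - B ** B)"
      by (simp add: algebra_simps del: scaleR_conv_of_real)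
    finally show ?thesis unfolding m .
  qed
  have s: "NCw N (A + B) (zs (Suc k) + zs k)" unfolding A_def B_def by (rule NCw.aw[OF Zs_NCw Zs_NCw])
  have "NCw N ((A - B) ** (A + B)) (w * (zs (Suc k) + zs k))"
    by (rule NCw_mult[OF w[folded A_def B_def] s])
  then have "NCw N ((1/2) *\<^sub>R ((A - B) ** (A + B))) ((1/2) * (w * (zs (Suc k) + zs k)))"
    by (intro NCw.sw) auto
  then show ?case unfolding e by blast
qed

lemma Zs_psd_le: "psd (Zs N k) \<and> Re (qform x (Zs N k) x) \<le> (norm x)^2"
proof -
  have "psd (Zs N k) \<and> Re (qform x (Zs N k) x) \<le> zs k * (norm x)^2"
    using NCw_bounds[OF hN pN pIN Zs_NCw] by blast
  moreover have "zs k * (norm x)^2 \<le> (norm x)^2" using zs_bounds[of k] by (simp add: mult_left_le_one_le)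
  ultimately show ?thesis by linarith
qed

lemma Zs_mono: "Re (qform x (Zs N k) x) \<le> Re (qform x (Zs N (Suc k)) x)"
proof -
  obtain w where "NCw N (Zs N (Suc k) - Zs N k) w" using Zs_diff by blast
  then have "psd (Zs N (Suc k) - Zs N k)" using NCw_bounds[OF hN pN pIN] by blast
  then show ?thesis unfolding psd_def qform_diff by auto
qed

lemma Zs_herm: "herm (Zs N k)" using NCw_herm[OF hN pN pIN Zs_NCw] .

lemma qform_Zs_conv: "\<exists>L. (\<lambda>k. qform x (Zs N k) x) \<longlonglongrightarrow> L"
proof -
  let ?f = "\<lambda>k. Re (qform x (Zs N k) x)"
  have "incseq ?f" by (rule incseq_SucI) (rule Zs_mono)
  moreover have "\<forall>i. ?f i \<le> (norm x)^2" using Zs_psd_le by blast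
  ultimately obtain L where L: "?f \<longlonglongrightarrow> L" by (rule incseq_convergent)
  have eq: "(\<lambda>k. qform x (Zs N k) x) = (\<lambda>k. of_real (?f k))"
    by (intro ext) (rule qform_herm_real[OF Zs_herm])
  show ?thesis by (rule exI[of _ "of_real L"], subst eq, rule tendsto_of_real[OF L])
qed

lemma Zs_entry_conv: "\<exists>l. (\<lambda>k. Zs N k $ a $ b) \<longlonglongrightarrow> l"
proof -
  define q where "q x k = qform x (Zs N k) x" for x k
  obtain l1 where l1: "q (axis a 1 + axis b 1) \<longlonglongrightarrow> l1" unfolding q_def using qform_Zs_conv by blast
  obtain l2 where l2: "q (axis a 1) \<longlonglongrightarrow> l2" unfolding q_def using qform_Zs_conv by blast
  obtain l3 where l3: "q (axis b 1) \<longlonglongrightarrow> l3" unfolding q_def using qform_Zs_conv by blast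
  obtain l4 where l4: "q (axis a 1 + axis b \<i>) \<longlonglongrightarrow> l4" unfolding q_def using qform_Zs_conv by blast
  have e: "(\<lambda>k. Zs N k $ a $ b) = (\<lambda>k. (q (axis a 1 + axis b 1) k - q (axis a 1) k - q (axis b 1) k
      - \<i> * (q (axis a 1 + axis b \<i>) k - q (axis a 1) k - q (axis b 1) k)) / 2)"
  proof (rule ext)
    fix k
    have "2 * Zs N k $ a $ b = q (axis a 1 + axis b 1) k - q (axis a 1) k - q (axis b 1) k
      - \<i> * (q (axis a 1 + axis b \<i>) k - q (axis a 1) k - q (axis b 1) k)"
      unfolding q_def by (rule polarization)
    then show "Zs N k $ a $ b = (q (axis a 1 + axis b 1) k - q (axis a 1) k - q (axis b 1) k
      - \<i> * (q (axis a 1 + axis b \<i>) k - q (axis a 1) k - q (axis b 1) k)) / 2"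
      by (simp add: eq_divide_eq mult.commute)
  qed
  have "(\<lambda>k. (q (axis a 1 + axis b 1) k - q (axis a 1) k - q (axis b 1) k
      - \<i> * (q (axis a 1 + axis b \<i>) k - q (axis a 1) k - q (axis b 1) k)) / 2)
      \<longlonglongrightarrow> (l1 - l2 - l3 - \<i> * (l4 - l2 - l3)) / 2"
    by (intro tendsto_divide tendsto_diff tendsto_mult tendsto_const l1 l2 l3 l4) simp
  then show ?thesis unfolding e by blast
qed

definition Zlim :: "'d cmat" where "Zlim = (\<chi> a b. lim (\<lambda>k. Zs N k $ a $ b))"

lemma Zs_conv: "Zs N \<longlonglongrightarrow> Zlim"
proof (rule vec_tendstoI)
  fix a show "(\<lambda>k. Zs N k $ a) \<longlonglongrightarrow> Zlim $ a"
  proof (rule vec_tendstoI)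
    fix b show "(\<lambda>k. Zs N k $ a $ b) \<longlonglongrightarrow> Zlim $ a $ b"
      unfolding Zlim_def using Zs_entry_conv[of a b] by (simp add: convergent_LIMSEQ_iff[symmetric] convergent_def)
  qed
qed

lemma Zlim_eq: "Zlim = (1/2) *\<^sub>R (N + Zlim ** Zlim)"
proof -
  have "(\<lambda>k. Zs N (Suc k)) \<longlonglongrightarrow> Zlim" using LIMSEQ_Suc[OF Zs_conv] .
  moreover have "(\<lambda>k. Zs N (Suc k)) \<longlonglongrightarrow> (1/2) *\<^sub>R (N + Zlim ** Zlim)"
    unfolding Zs.simps by (intro tendsto_intros tendsto_mmult Zs_conv)
  ultimately show ?thesis using LIMSEQ_unique by blast
qed

lemma Zlim_herm: "herm Zlim"
proof -
  have "(\<lambda>k. adj (Zs N k)) \<longlonglongrightarrow> adj Zlim" by (rule tendsto_adj[OF Zs_conv])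
  moreover have "(\<lambda>k. adj (Zs N k)) = Zs N" using Zs_herm unfolding herm_def by auto
  ultimately show ?thesis unfolding herm_def using Zs_conv LIMSEQ_unique by metis
qed

lemma Zlim_le: "Re (qform x Zlim x) \<le> (norm x)^2"
proof -
  have "(\<lambda>k. Re (qform x (Zs N k) x)) \<longlonglongrightarrow> Re (qform x Zlim x)"
    by (intro tendsto_intros bounded_linear.tendsto[OF bounded_linear_qform] Zs_conv)
  then show ?thesis by (rule LIMSEQ_le_const2) (use Zs_psd_le in auto)
qed

lemma Zlim_comm:
  assumes "R ** N = N ** R" shows "R ** Zlim = Zlim ** R"
proof -
  have "(\<lambda>k. R ** Zs N k) \<longlonglongrightarrow> R ** Zlim" by (intro tendsto_mmult tendsto_const Zs_conv)
  moreover have "(\<lambda>k. Zs N k ** R) \<longlonglongrightarrow> Zlim ** R" by (intro tendsto_mmult tendsto_const Zs_conv)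
  moreover have "(\<lambda>k. R ** Zs N k) = (\<lambda>k. Zs N k ** R)"
    using NCw_comm[OF Zs_NCw assms] by auto
  ultimately show ?thesis using LIMSEQ_unique by metis
qed

lemma S_props:
  defines "S \<equiv> mat 1 - Zlim"
  shows "psd S" "S ** S = mat 1 - N" "\<And>R. R ** N = N ** R \<Longrightarrow> R ** S = S ** R"
proof -
  show "psd S" unfolding psd_def S_def qform_diff
    using Zlim_le herm_real[OF Zlim_herm] by (simp add: qform_id)
  have ZZ: "Zlim ** Zlim = 2 *\<^sub>R Zlim - N"
  proof -
    have "2 *\<^sub>R Zlim = 2 *\<^sub>R ((1/2) *\<^sub>R (N + Zlim ** Zlim))"
      by (rule arg_cong[where f="\<lambda>z. 2 *\<^sub>R z", OF Zlim_eq])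
    then have "2 *\<^sub>R Zlim = N + Zlim ** Zlim" by (simp del: scaleR_conv_of_real)
    then show ?thesis by (simp add: algebra_simps)
  qed
  show "S ** S = mat 1 - N" unfolding S_def
    by (simp add: matrix_sub_ldistrib matrix_sub_rdistrib ZZ scaleR_2 del: scaleR_conv_of_real)
  show "R ** S = S ** R" if "R ** N = N ** R" for R
    unfolding S_def using Zlim_comm[OF that] by (simp add: matrix_sub_ldistrib matrix_sub_rdistrib)
qed

end


lemma sqrt_ex:
  fixes M :: "('d::finite) cmat" assumes pM: "psd M"
  shows "\<exists>R0. psd R0 \<and> R0 ** R0 = M \<and> (\<forall>R. psd R \<and> R ** R = M \<longrightarrow> R = R0)"
proof -
  define C where "C = real (CARD('d)*CARD('d))"
  define c where "c = C * norm M + 1"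
  have c0: "c > 0" unfolding c_def C_def by (simp add: add_nonneg_pos)
  define N where "N = mat 1 - (1/c) *\<^sub>R M"
  have hM: "herm M" by (rule psd_herm[OF pM])
  have hN: "herm N" unfolding N_def herm_def using hM
    by (simp add: adj_diff adj_scaleR herm_def del: scaleR_conv_of_real)
  have pIN: "psd (mat 1 - N)" unfolding N_def using psd_scaleR[OF pM, of "1/c"] c0 by simp
  have pN: "psd N" unfolding psd_def
  proof
    fix x
    have q: "qform x N x = of_real ((norm x)^2) - of_real (1/c) * qform x M x"
      unfolding N_def qform_diff qform_id qform_scaleR ..
    have "Re (qform x M x) \<le> cmod (qform x M x)" by (rule complex_Re_le_cmod)
    also have "\<dots> \<le> C * norm x * norm M * norm x" unfolding C_def by (rule qform_bound)
    also have "\<dots> \<le> c * (norm x)^2"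
    proof -
      have "C * norm x * norm M * norm x = (C * norm M) * (norm x)^2" by (simp add: power2_eq_square)
      also have "\<dots> \<le> c * (norm x)^2" unfolding c_def by (intro mult_right_mono) auto
      finally show ?thesis .
    qed
    finally have "Re (qform x M x) / c \<le> (norm x)^2" using c0 by (simp add: divide_le_eq mult.commute)
    then show "Im (qform x N x) = 0 \<and> 0 \<le> Re (qform x N x)" unfolding q using pM[unfolded psd_def] by auto
  qed
  define S where "S = mat 1 - Zlim N"
  have pS: "psd S" unfolding S_def by (rule S_props(1)[OF hN pN pIN])
  have SS: "S ** S = mat 1 - N" unfolding S_def by (rule S_props(2)[OF hN pN pIN])
  have Scomm: "R ** S = S ** R" if "R ** N = N ** R" for R unfolding S_def by (rule S_props(3)[OF hN pN pIN that])
  define R0 where "R0 = sqrt c *\<^sub>R S"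
  have pR0: "psd R0" unfolding R0_def using pS c0 by (intro psd_scaleR) auto
  have R0R0: "R0 ** R0 = M"
  proof -
    have "R0 ** R0 = (sqrt c * sqrt c) *\<^sub>R (S ** S)" unfolding R0_def
      by (simp add: matrix_scaleR_left matrix_scaleR_right del: scaleR_conv_of_real)
    also have "\<dots> = c *\<^sub>R ((1/c) *\<^sub>R M)" using c0 SS unfolding N_def by (simp del: scaleR_conv_of_real)
    also have "\<dots> = M" using c0 by (simp del: scaleR_conv_of_real)
    finally show ?thesis .
  qed
  have uniq: "R = R0" if pR: "psd R" and RR: "R ** R = M" for R
  proof -
    have RM: "R ** M = M ** R" using RR matrix_mul_assoc by metis
    have RN: "R ** N = N ** R" unfolding N_def
      by (simp add: matrix_sub_ldistrib matrix_sub_rdistrib matrix_scaleR_left matrix_scaleR_right RM del: scaleR_conv_of_real)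
    have RR0: "R ** R0 = R0 ** R" unfolding R0_def using Scomm[OF RN]
      by (simp add: matrix_scaleR_left matrix_scaleR_right del: scaleR_conv_of_real)
    define D where "D = R - R0"
    have hD: "herm D" unfolding D_def herm_def using psd_herm[OF pR] psd_herm[OF pR0] by (simp add: adj_diff herm_def)
    have "D ** (R + R0) = 0" unfolding D_def by (simp add: matrix_add_ldistrib matrix_sub_rdistrib RR R0R0 RR0)
    then have "(D ** (R + R0)) ** D = 0" by simp
    then have z: "D ** R ** D + D ** R0 ** D = 0" by (simp add: matrix_add_ldistrib matrix_add_rdistrib)
    have p1: "psd (D ** R ** D)" by (rule psd_cong[OF pR hD])
    have p2: "psd (D ** R0 ** D)" by (rule psd_cong[OF pR0 hD])
    have zz: "qform x (D ** R ** D) x = 0 \<and> qform x (D ** R0 ** D) x = 0" for x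
    proof -
      have "qform x (D ** R ** D + D ** R0 ** D) x = 0" unfolding z by simp
      then have s: "qform x (D ** R ** D) x + qform x (D ** R0 ** D) x = 0" unfolding qform_add .
      have a: "Im (qform x (D ** R ** D) x) = 0" "0 \<le> Re (qform x (D ** R ** D) x)" using p1 unfolding psd_def by auto
      have b: "Im (qform x (D ** R0 ** D) x) = 0" "0 \<le> Re (qform x (D ** R0 ** D) x)" using p2 unfolding psd_def by auto
      have "Re (qform x (D ** R ** D) x) + Re (qform x (D ** R0 ** D) x) = 0" using arg_cong[OF s, of Re] by simp
      then show ?thesis using a b by (simp add: complex_eq_iff)
    qed
    have z1: "D ** R ** D = 0" by (rule qform_zero_imp) (use zz in blast)
    have z2: "D ** R0 ** D = 0" by (rule qform_zero_imp) (use zz in blast)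
    have "D ** D ** D = D ** (R - R0) ** D" by (simp add: D_def)
    also have "\<dots> = D ** R ** D - D ** R0 ** D" by (simp add: matrix_sub_ldistrib matrix_sub_rdistrib)
    finally have D3: "D ** D ** D = 0" using z1 z2 by simp
    have "(D ** D) ** (D ** D) = D ** (D ** D ** D)" by (simp add: matrix_mul_assoc)
    then have "(D ** D) ** (D ** D) = 0" using D3 by simp
    moreover have "herm (D ** D)" using hD unfolding herm_def by (simp add: adj_mult)
    ultimately have "D ** D = 0" using herm_sq_zero by blast
    then have "D = 0" using herm_sq_zero hD by blast
    then show ?thesis unfolding D_def by simp
  qed
  show ?thesis using pR0 R0R0 uniq by blast
qed

lemma psd_sqrt_props:
  assumes "psd M" shows "psd (psd_sqrt M) \<and> psd_sqrt M ** psd_sqrt M = M"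
proof -
  obtain R0 where R0: "psd R0" "R0 ** R0 = M" "\<forall>R. psd R \<and> R ** R = M \<longrightarrow> R = R0"
    using sqrt_ex[OF assms] by blast
  have "psd_sqrt M = R0" unfolding psd_sqrt_def
    by (rule the_equality) (use R0 in blast)+
  then show ?thesis using R0(1,2) by simp
qed

lemma inv_sqrt_props:
  fixes M :: "('d::finite) cmat"
  assumes pd: "pos_def M"
  shows "inv_sqrt M ** psd_sqrt M = mat 1 \<and> psd_sqrt M ** inv_sqrt M = mat 1 \<and> herm (inv_sqrt M)"
proof -
  define R where "R = psd_sqrt M"
  have pR: "psd R" and RR: "R ** R = M" using psd_sqrt_props[OF pos_def_psd[OF pd]] unfolding R_def by auto
  have "inj ((*v) R)"
  proof (rule injI)
    fix x y assume "R *v x = R *v y"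
    then have "R *v (x - y) = 0" by (simp add: matrix_vector_mult_diff_distrib)
    then have "M *v (x - y) = 0" unfolding RR[symmetric] matrix_vector_mul_assoc[symmetric] by simp
    then have "qform (x - y) M (x - y) = 0" by (simp add: qform_def)
    then have "x - y = 0" using pd unfolding pos_def_def by (metis less_irrefl zero_complex.sel(1))
    then show "x = y" by simp
  qed
  then have "det R \<noteq> 0"
    using det_nz_iff_inj_gen[OF matrix_vector_mul_linear_gen[of R]] by (simp add: matrix_of_matrix_vector_mul)
  then have "invertible R" by (simp add: invertible_det_nz)
  then obtain A' where "R ** A' = mat 1 \<and> A' ** R = mat 1" unfolding invertible_def by blast
  then have inv: "R ** matrix_inv R = mat 1 \<and> matrix_inv R ** R = mat 1"
    unfolding matrix_inv_def by (rule someI)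
  define Si where "Si = matrix_inv R"
  have "adj Si ** R = mat 1"
    using arg_cong[OF conjunct1[OF inv], of adj] psd_herm[OF pR] unfolding Si_def
    by (simp add: adj_mult herm_def)
  then have "adj Si = Si"
    by (metis Si_def inv matrix_mul_assoc matrix_mul_lid matrix_mul_rid)
  then show ?thesis using inv unfolding inv_sqrt_def R_def[symmetric] Si_def herm_def by simp
qed


lemma qform_sandwich: "qform x ((A ** B) ** C) y = qform (adj A *v x) B (C *v y)"
  by (subst qform_mult2) (rule qform_mult)

theorem mainTheorem2:
  fixes P :: "('d::finite) cmat \<Rightarrow> 'd cmat"
    and B :: "real \<Rightarrow> 'd cmat \<Rightarrow> 'd cmat"
    and V :: "real \<Rightarrow> 'd cmat \<Rightarrow> 'd cmat"
  assumes P_lin: "clinear_map P" and P_cp: "completely_positive P"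
    and B_lin: "\<And>t. t \<ge> 0 \<Longrightarrow> clinear_map (B t)"
    and B_cp: "\<And>t. t \<ge> 0 \<Longrightarrow> completely_positive (B t)"
    and B_cont: "\<And>a. continuous_on {0..} (\<lambda>t. B t a)"
    and V_lin: "\<And>t. t \<ge> 0 \<Longrightarrow> clinear_map (V t)"
    and V_eq: "\<And>t a. t \<ge> 0 \<Longrightarrow>
       ((\<lambda>\<tau>. V \<tau> a) has_vector_derivative
          (P (V t a) + integral {0..t} (\<lambda>s. B (t - s) (V s a)))) (at t within {0..})"
    and V_init: "\<And>a. ((\<lambda>t. V t a) \<longlongrightarrow> a) (at_right 0)"
  shows "(\<forall>t\<ge>0. completely_positive (V t)) \<and>
         ((\<forall>t\<ge>0. pos_def (V t (mat 1))) \<longrightarrow>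
            (\<forall>t\<ge>0. completely_positive
                      (\<lambda>a. inv_sqrt (V t (mat 1)) ** V t a ** inv_sqrt (V t (mat 1))) \<and>
                    inv_sqrt (V t (mat 1)) ** V t (mat 1) ** inv_sqrt (V t (mat 1)) = mat 1))"
proof -
  have p1: "\<forall>t\<ge>0. completely_positive (V t)"
    using part1[OF P_lin P_cp B_lin B_cp B_cont V_lin V_eq V_init] by blast
  have p2: "completely_positive (\<lambda>a. inv_sqrt (V t (mat 1)) ** V t a ** inv_sqrt (V t (mat 1))) \<and>
                    inv_sqrt (V t (mat 1)) ** V t (mat 1) ** inv_sqrt (V t (mat 1)) = mat 1"
    if pos: "\<forall>t\<ge>0. pos_def (V t (mat 1))" and t: "t \<ge> 0" for t
  proof -
    define M where "M = V t (mat 1)"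
    define S where "S = inv_sqrt M"
    define R where "R = psd_sqrt M"
    have pd: "pos_def M" unfolding M_def using pos t by blast
    have SR: "S ** R = mat 1" and RS: "R ** S = mat 1" and hS: "herm S"
      using inv_sqrt_props[OF pd] unfolding S_def R_def by auto
    have RR: "R ** R = M" using psd_sqrt_props[OF pos_def_psd[OF pd]] unfolding R_def by auto
    have cp: "completely_positive (\<lambda>a. S ** V t a ** S)"
      unfolding completely_positive_def block_psd_Qb
    proof (intro allI impI)
      fix n and X :: "nat \<Rightarrow> nat \<Rightarrow> 'd cmat" and y
      assume X: "\<forall>y. Im (Qb n y X) = 0 \<and> 0 \<le> Re (Qb n y X)"
      have "block_psd n (\<lambda>i j. V t (X i j))"
        using p1 t X unfolding completely_positive_def block_psd_Qb by blast
      then have Vb: "Im (Qb n y' (\<lambda>i j. V t (X i j))) = 0 \<and> 0 \<le> Re (Qb n y' (\<lambda>i j. V t (X i j)))" for y'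
        unfolding block_psd_Qb by blast
      have eq: "Qb n y (\<lambda>i j. S ** V t (X i j) ** S) = Qb n (\<lambda>i. S *v y i) (\<lambda>i j. V t (X i j))"
        unfolding Qb_def qform_sandwich using hS by (simp add: herm_def)
      show "Im (Qb n y (\<lambda>i j. S ** V t (X i j) ** S)) = 0 \<and> 0 \<le> Re (Qb n y (\<lambda>i j. S ** V t (X i j) ** S))"
        unfolding eq by (rule Vb)
    qed
    have "S ** M ** S = (S ** R) ** (R ** S)" unfolding RR[symmetric] by (simp add: matrix_mul_assoc)
    then have "S ** M ** S = mat 1" using SR RS by simp
    then show ?thesis using cp unfolding S_def M_def by simp
  qed
  show ?thesis using p1 p2 by blast
qed


end
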